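(* Let $R$ be a commutative Artinian ring and $M$ a non-zero $R$-module. Let $\sum_{i=1}^n N_i=M=\sum_{j=1}^m K_j$ be two minimal PS-hollow representations of $M$, where $N_i$ is $H_i$-PS-hollow for each $i\in\{1,\dots,n\}$ and $K_j$ is $H'_j$-PS-hollow for each $j\in\{1,\dots,m\}$. Then $n=m$, $\{H_1,\dots,H_n\}=\{H'_1,\dots,H'_n\}$, and $In(N_i)=In(K_j)$ whenever $H_i=H'_j$.
   Context: All rings are commutative with unity. An $R$-submodule $N\leq M$ is PS-hollow iff for every ideal $I\leq R$ and every submodule $L\leq M$: $N\subseteq IM+L$ implies $N\subseteq IM$ or $N\subseteq L$. For a PS-hollow $N\leq M$ put $A_N=\{I\leq R: N\subseteq IM\}$, $H_N$ the set of minimal elements of $A_N$ (w.r.t. inclusion), and $In(N)=\bigcap_{I\in H_N} IM$ ($=M$ if $H_N=\emptyset$). For a set $H$ of ideals, $N$ is $H$-PS-hollow iff $N$ is PS-hollow and $H_N=H$. A minimal PS-hollow representation of $M$ is an expression $M=\sum_{i=1}^n N_i$ with each $N_i$ $H_i$-PS-hollow, such that $In(N_1),\dots,In(N_n)$ are pairwise incomparable and $N_j\not\subseteq\sum_{i\neq j}N_i$ for every $j$. *)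

theory Defs
  imports "HOL-Algebra.Module" "HOL-Algebra.Ideal"
begin

definition artinian :: "'a ring \<Rightarrow> bool" where
  "artinian R \<longleftrightarrow> cring R \<and>
     (\<forall>I :: nat \<Rightarrow> 'a set. (\<forall>k. ideal (I k) R) \<and> (\<forall>k. I (Suc k) \<subseteq> I k)
        \<longrightarrow> (\<exists>k. \<forall>l\<ge>k. I l = I k))"

definition gen_submod :: "'a ring \<Rightarrow> ('a, 'b) module \<Rightarrow> 'b set \<Rightarrow> 'b set" where
  "gen_submod R M S = \<Inter> {L. submodule L R M \<and> S \<subseteq> L}"

definition ideal_mult :: "'a ring \<Rightarrow> ('a, 'b) module \<Rightarrow> 'a set \<Rightarrow> 'b set" where
  "ideal_mult R M I = gen_submod R M {a \<odot>\<^bsub>M\<^esub> x | a x. a \<in> I \<and> x \<in> carrier M}"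

definition submod_sum :: "'a ring \<Rightarrow> ('a, 'b) module \<Rightarrow> 'i set \<Rightarrow> ('i \<Rightarrow> 'b set) \<Rightarrow> 'b set" where
  "submod_sum R M A N = gen_submod R M (\<Union>i\<in>A. N i)"

definition PS_hollow :: "'a ring \<Rightarrow> ('a, 'b) module \<Rightarrow> 'b set \<Rightarrow> bool" where
  "PS_hollow R M N \<longleftrightarrow> submodule N R M \<and>
     (\<forall>I L. ideal I R \<and> submodule L R M \<and> N \<subseteq> gen_submod R M (ideal_mult R M I \<union> L)
        \<longrightarrow> N \<subseteq> ideal_mult R M I \<or> N \<subseteq> L)"

definition A_set :: "'a ring \<Rightarrow> ('a, 'b) module \<Rightarrow> 'b set \<Rightarrow> 'a set set" where
  "A_set R M N = {I. ideal I R \<and> N \<subseteq> ideal_mult R M I}"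

definition H_set :: "'a ring \<Rightarrow> ('a, 'b) module \<Rightarrow> 'b set \<Rightarrow> 'a set set" where
  "H_set R M N = {I \<in> A_set R M N. \<forall>J \<in> A_set R M N. J \<subseteq> I \<longrightarrow> J = I}"

definition In_sub :: "'a ring \<Rightarrow> ('a, 'b) module \<Rightarrow> 'b set \<Rightarrow> 'b set" where
  "In_sub R M N = (if H_set R M N = {} then carrier M
                   else \<Inter> {ideal_mult R M I | I. I \<in> H_set R M N})"

definition H_PS_hollow :: "'a ring \<Rightarrow> ('a, 'b) module \<Rightarrow> 'a set set \<Rightarrow> 'b set \<Rightarrow> bool" where
  "H_PS_hollow R M H N \<longleftrightarrow> PS_hollow R M N \<and> H_set R M N = H"

definition min_PS_rep :: "'a ring \<Rightarrow> ('a, 'b) module \<Rightarrow> nat \<Rightarrow> (nat \<Rightarrow> 'b set)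
    \<Rightarrow> (nat \<Rightarrow> 'a set set) \<Rightarrow> bool" where
  "min_PS_rep R M n N H \<longleftrightarrow>
     carrier M = submod_sum R M {1..n} N \<and>
     (\<forall>i\<in>{1..n}. H_PS_hollow R M (H i) (N i)) \<and>
     (\<forall>i\<in>{1..n}. \<forall>j\<in>{1..n}. i \<noteq> j \<longrightarrow> \<not> In_sub R M (N i) \<subseteq> In_sub R M (N j)) \<and>
     (\<forall>j\<in>{1..n}. \<not> N j \<subseteq> submod_sum R M ({1..n} - {j}) N)"

end

theory Submission imports Defs begin

lemma sub_zero: "submodule H R M \<Longrightarrow> \<zero>\<^bsub>M\<^esub> \<in> H"
  using subgroup.one_closed[OF submodule.axioms(1)] by fastforce

lemma gen_mem: "x \<in> gen_submod R M S \<longleftrightarrow> (\<forall>L. submodule L R M \<and> S \<subseteq> L \<longrightarrow> x \<in> L)"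
  unfolding gen_submod_def by simp

lemma gen_least: "submodule L R M \<Longrightarrow> S \<subseteq> L \<Longrightarrow> gen_submod R M S \<subseteq> L"
  unfolding gen_submod_def by blast

lemma gen_incl: "S \<subseteq> gen_submod R M S"
  unfolding gen_submod_def by blast

lemma gen_mono: "S \<subseteq> T \<Longrightarrow> gen_submod R M S \<subseteq> gen_submod R M T"
  unfolding gen_submod_def by blast

lemma zero_in_gen: "\<zero>\<^bsub>M\<^esub> \<in> gen_submod R M S"
  unfolding gen_mem using sub_zero by metis

lemma gen_carrier: "module R M \<Longrightarrow> S \<subseteq> carrier M \<Longrightarrow> gen_submod R M S \<subseteq> carrier M"
  by (rule gen_least) (auto intro: module.carrier_is_submodule)

lemma gen_sub: assumes "module R M" "S \<subseteq> carrier M"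
  shows "submodule (gen_submod R M S) R M"
proof (rule module.submoduleI[OF assms(1)])
  show "gen_submod R M S \<subseteq> carrier M" using gen_carrier assms .
  show "\<zero>\<^bsub>M\<^esub> \<in> gen_submod R M S" by (rule zero_in_gen)
  show "\<ominus>\<^bsub>M\<^esub> a \<in> gen_submod R M S" if "a \<in> gen_submod R M S" for a
    unfolding gen_mem
  proof (intro allI impI)
    fix L assume L: "submodule L R M \<and> S \<subseteq> L"
    then have "a \<in> L" using that unfolding gen_mem by blast
    then show "\<ominus>\<^bsub>M\<^esub> a \<in> L" using module.submoduleE(3)[OF assms(1)] L by blast
  qed
  show "a \<oplus>\<^bsub>M\<^esub> b \<in> gen_submod R M S" if "a \<in> gen_submod R M S" "b \<in> gen_submod R M S" for a b
    unfolding gen_mem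
  proof (intro allI impI)
    fix L assume L: "submodule L R M \<and> S \<subseteq> L"
    then have "a \<in> L" "b \<in> L" using that unfolding gen_mem by blast+
    then show "a \<oplus>\<^bsub>M\<^esub> b \<in> L" using module.submoduleE(5)[OF assms(1)] L by blast
  qed
  show "a \<odot>\<^bsub>M\<^esub> b \<in> gen_submod R M S" if "a \<in> carrier R" "b \<in> gen_submod R M S" for a b
    unfolding gen_mem
  proof (intro allI impI)
    fix L assume L: "submodule L R M \<and> S \<subseteq> L"
    then have "b \<in> L" using that unfolding gen_mem by blast
    then show "a \<odot>\<^bsub>M\<^esub> b \<in> L" using module.submoduleE(4)[OF assms(1)] L that(1) by blast
  qed
qed

lemma zero_sub: assumes "module R M" shows "submodule {\<zero>\<^bsub>M\<^esub>} R M"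
proof -
  interpret module R M by fact
  show ?thesis by (rule submoduleI) auto
qed

lemma im_carrier: assumes "module R M" "ideal I R" shows "ideal_mult R M I \<subseteq> carrier M"
  unfolding ideal_mult_def
proof (rule gen_carrier[OF assms(1)])
  show "{a \<odot>\<^bsub>M\<^esub> x |a x. a \<in> I \<and> x \<in> carrier M} \<subseteq> carrier M"
    using ideal.Icarr[OF assms(2)] module.smult_closed[OF assms(1)] by auto
qed

lemma im_mono: "J \<subseteq> I \<Longrightarrow> ideal_mult R M J \<subseteq> ideal_mult R M I"
  unfolding ideal_mult_def by (rule gen_mono) blast

lemma ps_split:
  assumes "PS_hollow R M N" "ideal I R" "submodule L R M" "N \<subseteq> gen_submod R M (ideal_mult R M I \<union> L)"
  shows "N \<subseteq> ideal_mult R M I \<or> N \<subseteq> L"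
  using assms unfolding PS_hollow_def by simp

lemma cover:
  assumes mod: "module R M" and ps: "PS_hollow R M N" and nz: "\<not> N \<subseteq> {\<zero>\<^bsub>M\<^esub>}"
    and fin: "finite S"
  shows "(\<forall>j\<in>S. ideal (I j) R) \<longrightarrow> N \<subseteq> gen_submod R M (\<Union>j\<in>S. ideal_mult R M (I j)) \<longrightarrow> (\<exists>j\<in>S. N \<subseteq> ideal_mult R M (I j))"
  using fin
proof (induction S rule: finite_induct)
  case empty
  have "gen_submod R M {} \<subseteq> {\<zero>\<^bsub>M\<^esub>}" by (rule gen_least[OF zero_sub[OF mod]]) simp
  then show ?case using nz by simp
next
  case (insert j S)
  show ?case
  proof (intro impI)
    assume ids: "\<forall>j\<in>insert j S. ideal (I j) R"
      and Nin: "N \<subseteq> gen_submod R M (\<Union>j\<in>insert j S. ideal_mult R M (I j))"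
    let ?U = "\<Union>j\<in>S. ideal_mult R M (I j)"
    have idS: "\<forall>j\<in>S. ideal (I j) R" using ids by simp
    have idj: "ideal (I j) R" using ids by simp
    have Uc: "?U \<subseteq> carrier M"
    proof
      fix x assume "x \<in> ?U"
      then obtain l where "l \<in> S" "x \<in> ideal_mult R M (I l)" by blast
      then show "x \<in> carrier M" using im_carrier[OF mod] idS by blast
    qed
    have L: "submodule (gen_submod R M ?U) R M" by (rule gen_sub[OF mod Uc])
    have "N \<subseteq> gen_submod R M (ideal_mult R M (I j) \<union> ?U)" using Nin by simp
    also have "\<dots> \<subseteq> gen_submod R M (ideal_mult R M (I j) \<union> gen_submod R M ?U)"
      by (rule gen_mono) (use gen_incl[of ?U R M] in blast)
    finally have Nin2: "N \<subseteq> gen_submod R M (ideal_mult R M (I j) \<union> gen_submod R M ?U)" .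
    have "N \<subseteq> ideal_mult R M (I j) \<or> N \<subseteq> gen_submod R M ?U"
      by (rule ps_split[OF ps idj L Nin2])
    then show "\<exists>j\<in>insert j S. N \<subseteq> ideal_mult R M (I j)"
    proof
      assume "N \<subseteq> ideal_mult R M (I j)" then show ?thesis by blast
    next
      assume "N \<subseteq> gen_submod R M ?U"
      then have "\<exists>j\<in>S. N \<subseteq> ideal_mult R M (I j)" using insert.IH idS by blast
      then show ?thesis by blast
    qed
  qed
qed

lemma exists_j:
  fixes m :: nat
  assumes mod: "module R M" and ps: "PS_hollow R M N" and nz: "\<not> N \<subseteq> {\<zero>\<^bsub>M\<^esub>}"
    and car: "carrier M = submod_sum R M {1..m} K"
  shows "\<exists>j\<in>{1..m}. A_set R M (K j) \<subseteq> A_set R M N"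
proof (rule ccontr)
  assume "\<not> ?thesis"
  then have "\<forall>j\<in>{1..m}. \<exists>I. I \<in> A_set R M (K j) \<and> I \<notin> A_set R M N" by blast
  then obtain f where f: "\<forall>j\<in>{1..m}. f j \<in> A_set R M (K j) \<and> f j \<notin> A_set R M N"
    by (rule bchoice[THEN exE]) blast
  have idf: "\<forall>j\<in>{1..m}. ideal (f j) R" using f unfolding A_set_def by simp
  have Kf: "K j \<subseteq> ideal_mult R M (f j)" if "j \<in> {1..m}" for j
    using f that unfolding A_set_def by simp
  have Nsub: "N \<subseteq> carrier M" using ps module.submoduleE(1)[OF mod] unfolding PS_hollow_def by blast
  have "(\<Union>j\<in>{1..m}. K j) \<subseteq> (\<Union>j\<in>{1..m}. ideal_mult R M (f j))"
    using Kf by blast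
  then have "carrier M \<subseteq> gen_submod R M (\<Union>j\<in>{1..m}. ideal_mult R M (f j))"
    unfolding car submod_sum_def by (rule gen_mono)
  then have "N \<subseteq> gen_submod R M (\<Union>j\<in>{1..m}. ideal_mult R M (f j))"
    using Nsub by (rule order_trans[rotated])
  then obtain j where j: "j \<in> {1..m}" "N \<subseteq> ideal_mult R M (f j)"
    using cover[OF mod ps nz finite_atLeastAtMost[of 1 m], of f] idf by blast
  then have "f j \<in> A_set R M N" using idf unfolding A_set_def by simp
  then show False using f j(1) by blast
qed

lemma dcc:
  assumes art: "artinian R" and I: "I \<in> A" and ids: "\<forall>J\<in>A. ideal J R"
  shows "\<exists>J\<in>A. J \<subseteq> I \<and> (\<forall>J'\<in>A. J' \<subseteq> J \<longrightarrow> J' = J)"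
proof (rule ccontr)
  assume H: "\<not> ?thesis"
  have step: "\<exists>J'. J' \<in> A \<and> J' \<subset> J" if "J \<in> A" "J \<subseteq> I" for J
  proof -
    from H that have "\<not> (\<forall>J'\<in>A. J' \<subseteq> J \<longrightarrow> J' = J)" by blast
    then show ?thesis by auto
  qed
  define g where "g J = (SOME J'. J' \<in> A \<and> J' \<subset> J)" for J
  define s where "s k = (g ^^ k) I" for k
  have gs: "g J \<in> A \<and> g J \<subset> J" if JJ: "J \<in> A" "J \<subseteq> I" for J
  proof -
    obtain J' where "J' \<in> A \<and> J' \<subset> J" using step[OF JJ] by blast
    then show ?thesis unfolding g_def by (rule someI)
  qed
  have P: "s k \<in> A \<and> s k \<subseteq> I" for k
  proof (induction k)
    case 0 then show ?case using I by (simp add: s_def)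
  next
    case (Suc k)
    have "g (s k) \<in> A \<and> g (s k) \<subset> s k" using gs Suc by blast
    then show ?case using Suc by (auto simp: s_def)
  qed
  have strict: "s (Suc k) \<subset> s k" for k
    using gs[of "s k"] P[of k] by (simp add: s_def)
  have ch: "(\<forall>k. ideal (s k) R) \<and> (\<forall>k. s (Suc k) \<subseteq> s k)"
    using P ids strict by blast
  have "\<forall>I :: nat \<Rightarrow> _ set. (\<forall>k. ideal (I k) R) \<and> (\<forall>k. I (Suc k) \<subseteq> I k)
        \<longrightarrow> (\<exists>k. \<forall>l\<ge>k. I l = I k)"
    using art unfolding artinian_def by (rule conjunct2)
  then have "\<exists>k. \<forall>l\<ge>k. s l = s k" using ch by (rule mp[OF spec[of _ s]])
  then obtain k where "\<forall>l\<ge>k. s l = s k" by blast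
  then have "s (Suc k) = s k" by (metis le_Suc_eq order_refl)
  then show False using strict[of k] by simp
qed

lemma In_carrier:
  assumes mod: "module R M"
  shows "In_sub R M N \<subseteq> carrier M"
proof (cases "H_set R M N = {}")
  case True then show ?thesis by (simp add: In_sub_def)
next
  case False
  then obtain I where I: "I \<in> H_set R M N" by blast
  then have "ideal I R" unfolding H_set_def A_set_def by simp
  then have c: "ideal_mult R M I \<subseteq> carrier M" by (rule im_carrier[OF mod])
  have "In_sub R M N \<subseteq> ideal_mult R M I"
    using False I unfolding In_sub_def by (simp add: Inter_lower Setcompr_eq_image)
  then show ?thesis using c by (rule order_trans)
qed

lemma In_mem: "H_set R M N \<noteq> {} \<Longrightarrow> x \<in> In_sub R M N \<longleftrightarrow> (\<forall>J\<in>H_set R M N. x \<in> ideal_mult R M J)"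
  unfolding In_sub_def by (simp add: Setcompr_eq_image)

lemma In_mono:
  assumes mod: "module R M" and art: "artinian R" and sub: "A_set R M N' \<subseteq> A_set R M N"
  shows "In_sub R M N \<subseteq> In_sub R M N'"
proof (cases "H_set R M N' = {}")
  case True then show ?thesis using In_carrier[OF mod] by (simp add: In_sub_def)
next
  case False
  have ids: "\<forall>J\<in>A_set R M N. ideal J R" unfolding A_set_def by simp
  have key: "\<exists>J\<in>H_set R M N. J \<subseteq> I" if II: "I \<in> H_set R M N'" for I
  proof -
    have "I \<in> A_set R M N'" using II unfolding H_set_def by simp
    then have "I \<in> A_set R M N" using sub by (rule subsetD[rotated])
    then obtain J where J: "J \<in> A_set R M N" "J \<subseteq> I" "\<forall>J'\<in>A_set R M N. J' \<subseteq> J \<longrightarrow> J' = J"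
      using dcc[OF art _ ids] by blast
    then have "J \<in> H_set R M N" unfolding H_set_def by simp
    then show ?thesis using J(2) by blast
  qed
  obtain I0 where "I0 \<in> H_set R M N'" using False by blast
  then have HN: "H_set R M N \<noteq> {}" using key by blast
  show ?thesis
  proof
    fix x assume x: "x \<in> In_sub R M N"
    then have x': "\<forall>J\<in>H_set R M N. x \<in> ideal_mult R M J" using In_mem[OF HN] by blast
    have "x \<in> ideal_mult R M I" if II: "I \<in> H_set R M N'" for I
    proof -
      obtain J where "J \<in> H_set R M N" "J \<subseteq> I" using key[OF II] by blast
      then show ?thesis using x' im_mono[of J I R M] by blast
    qed
    then show "x \<in> In_sub R M N'" using In_mem[OF False] by blast
  qed
qed

lemma rep_car: "min_PS_rep R M n N H \<Longrightarrow> carrier M = submod_sum R M {1..n} N"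
  unfolding min_PS_rep_def by simp

lemma rep_ps: "min_PS_rep R M n N H \<Longrightarrow> i \<in> {1..n} \<Longrightarrow> PS_hollow R M (N i)"
  unfolding min_PS_rep_def H_PS_hollow_def by simp

lemma rep_H: "min_PS_rep R M n N H \<Longrightarrow> i \<in> {1..n} \<Longrightarrow> H_set R M (N i) = H i"
  unfolding min_PS_rep_def H_PS_hollow_def by simp

lemma rep_inc: "min_PS_rep R M n N H \<Longrightarrow> i \<in> {1..n} \<Longrightarrow> j \<in> {1..n} \<Longrightarrow> i \<noteq> j
  \<Longrightarrow> \<not> In_sub R M (N i) \<subseteq> In_sub R M (N j)"
  unfolding min_PS_rep_def by simp

lemma rep_nz: assumes "min_PS_rep R M n N H" "i \<in> {1..n}" shows "\<not> N i \<subseteq> {\<zero>\<^bsub>M\<^esub>}"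
proof
  assume "N i \<subseteq> {\<zero>\<^bsub>M\<^esub>}"
  then have "N i \<subseteq> submod_sum R M ({1..n} - {i}) N"
    unfolding submod_sum_def using zero_in_gen by blast
  then show False using assms unfolding min_PS_rep_def by simp
qed

lemma half:
  fixes n m :: nat
  assumes mod: "module R M" and art: "artinian R"
    and r1: "min_PS_rep R M n N H" and r2: "min_PS_rep R M m K H'" and i: "i \<in> {1..n}"
  shows "\<exists>j\<in>{1..m}. A_set R M (N i) = A_set R M (K j)"
proof -
  obtain j where j: "j \<in> {1..m}" "A_set R M (K j) \<subseteq> A_set R M (N i)"
    using exists_j[OF mod rep_ps[OF r1 i] rep_nz[OF r1 i] rep_car[OF r2]] by blast
  obtain i' where i': "i' \<in> {1..n}" "A_set R M (N i') \<subseteq> A_set R M (K j)"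
    using exists_j[OF mod rep_ps[OF r2 j(1)] rep_nz[OF r2 j(1)] rep_car[OF r1]] by blast
  have "A_set R M (N i') \<subseteq> A_set R M (N i)" using i'(2) j(2) by blast
  then have "In_sub R M (N i) \<subseteq> In_sub R M (N i')" by (rule In_mono[OF mod art])
  then have "i' = i" using rep_inc[OF r1 i i'(1)] by blast
  then show ?thesis using i' j by blast
qed

lemma In_H: "H_set R M X = H_set R M Y \<Longrightarrow> In_sub R M X = In_sub R M Y"
  unfolding In_sub_def by simp

lemma rep_inj: assumes "min_PS_rep R M n N H" shows "inj_on H {1..n}"
proof (rule inj_onI)
  fix i j assume ij: "i \<in> {1..n}" "j \<in> {1..n}" "H i = H j"
  then have "In_sub R M (N i) = In_sub R M (N j)" using rep_H[OF assms] In_H by metis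
  then show "i = j" using rep_inc[OF assms ij(1,2)] by blast
qed

theorem theorem5p9:
  fixes R :: "'a ring" and M :: "('a, 'b) module"
    and n m :: nat and N K :: "nat \<Rightarrow> 'b set" and H H' :: "nat \<Rightarrow> 'a set set"
  assumes "module R M"
    and "artinian R"
    and "carrier M \<noteq> {\<zero>\<^bsub>M\<^esub>}"
    and "min_PS_rep R M n N H"
    and "min_PS_rep R M m K H'"
  shows "n = m \<and> H ` {1..n} = H' ` {1..m} \<and>
         (\<forall>i\<in>{1..n}. \<forall>j\<in>{1..m}. H i = H' j \<longrightarrow> In_sub R M (N i) = In_sub R M (K j))"
proof -
  note r1 = assms(4) and r2 = assms(5)
  have img: "H ` {1..n} = H' ` {1..m}"
  proof
    show "H ` {1..n} \<subseteq> H' ` {1..m}"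
    proof
      fix x assume "x \<in> H ` {1..n}"
      then obtain i where i: "i \<in> {1..n}" "x = H i" by blast
      obtain j where j: "j \<in> {1..m}" "A_set R M (N i) = A_set R M (K j)"
        using half[OF assms(1,2) r1 r2 i(1)] by blast
      have "H i = H' j" using rep_H[OF r1 i(1)] rep_H[OF r2 j(1)] j(2)
        unfolding H_set_def by simp
      then show "x \<in> H' ` {1..m}" using i j by blast
    qed
    show "H' ` {1..m} \<subseteq> H ` {1..n}"
    proof
      fix x assume "x \<in> H' ` {1..m}"
      then obtain i where i: "i \<in> {1..m}" "x = H' i" by blast
      obtain j where j: "j \<in> {1..n}" "A_set R M (K i) = A_set R M (N j)"
        using half[OF assms(1,2) r2 r1 i(1)] by blast
      have "H' i = H j" using rep_H[OF r2 i(1)] rep_H[OF r1 j(1)] j(2)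
        unfolding H_set_def by simp
      then show "x \<in> H ` {1..n}" using i j by blast
    qed
  qed
  have "card (H ` {1..n}) = n" using card_image[OF rep_inj[OF r1]] by simp
  moreover have "card (H' ` {1..m}) = m" using card_image[OF rep_inj[OF r2]] by simp
  ultimately have "n = m" using img by simp
  moreover have "\<forall>i\<in>{1..n}. \<forall>j\<in>{1..m}. H i = H' j \<longrightarrow> In_sub R M (N i) = In_sub R M (K j)"
    using rep_H[OF r1] rep_H[OF r2] In_H by metis
  ultimately show ?thesis using img by blast
qed

end
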